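(* Let $G$ be the cdf of a continuous real random variable. For $(\lambda_1,\lambda_2)\in\mathbb{R}^2$ define $$F_{R18b}(x)=(1+\lambda_1+\lambda_2)G(x)-(\lambda_1+2\lambda_2)G^2(x)+\lambda_2G^3(x),\qquad F_G(x)=\lambda_1 G(x)+(\lambda_2-\lambda_1)G^2(x)+(1-\lambda_2)G^3(x).$$ Let $\mathscr{S}_{R18b}=\{(\lambda_1,\lambda_2): -1\le\lambda_1\le1,\ 0\le\lambda_2\le1\}$, $\mathscr{S}_{MR18b}=\{(\lambda_1,\lambda_2): -2\le\lambda_1\le1,\ -2\le\lambda_2\le1,\ -1\le\lambda_1+\lambda_2\le2\}$ and $\mathscr{S}_{MG}=\{(\lambda_1,\lambda_2):0\le\lambda_1\le3,\ 0\le\lambda_2\le3,\ 0\le\lambda_1+\lambda_2\le3\}$. Then: (i) For every $(\lambda_1,\lambda_2)\in\mathscr{S}_{R18b}$, $F_{R18b}$ is a cdf. (ii) For every $(\lambda_1,\lambda_2)\in\mathscr{S}_{MR18b}$, $F_{R18b}$ is a cdf. (iii) For every $(\lambda_1,\lambda_2)\in\mathscr{S}_{MR18b}$, $(1+\lambda_1+\lambda_2,1-\lambda_2)\in\mathscr{S}_{MG}$ and $F_{R18b}$ with parameters $(\lambda_1,\lambda_2)$ coincides with $F_G$ with parameters $(1+\lambda_1+\lambda_2,1-\lambda_2)$. (iv) For every $(\lambda_1,\lambda_2)\in\mathscr{S}_{MG}$, $(\lambda_1+\lambda_2-2,1-\lambda_2)\in\mathscr{S}_{MR18b}$ and $F_G$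 with parameters $(\lambda_1,\lambda_2)$ coincides with $F_{R18b}$ with parameters $(\lambda_1+\lambda_2-2,1-\lambda_2)$.
   Context: A cdf is a nondecreasing, right-continuous function $F:\mathbb{R}\to[0,1]$ with limits $0$ at $-\infty$ and $1$ at $+\infty$. $G^k(x)=(G(x))^k$. *)

theory Defs
  imports "HOL-Analysis.Analysis"
begin

text \<open>A cdf: nondecreasing, right-continuous, limits 0 at -infinity and 1 at +infinity
  (values in [0,1] follow but are stated explicitly as in the paper's definition).\<close>
definition is_cdf :: "(real \<Rightarrow> real) \<Rightarrow> bool" where
  "is_cdf F \<longleftrightarrow> mono F \<and> (\<forall>x. 0 \<le> F x \<and> F x \<le> 1) \<and>
     (\<forall>x. continuous (at_right x) F) \<and>
     (F \<longlongrightarrow> 0) at_bot \<and> (F \<longlongrightarrow> 1) at_top"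

definition F_R18b :: "real \<Rightarrow> real \<Rightarrow> (real \<Rightarrow> real) \<Rightarrow> real \<Rightarrow> real" where
  "F_R18b l1 l2 G x = (1 + l1 + l2) * G x - (l1 + 2 * l2) * (G x)^2 + l2 * (G x)^3"

definition F_G :: "real \<Rightarrow> real \<Rightarrow> (real \<Rightarrow> real) \<Rightarrow> real \<Rightarrow> real" where
  "F_G l1 l2 G x = l1 * G x + (l2 - l1) * (G x)^2 + (1 - l2) * (G x)^3"

definition S_R18b :: "(real \<times> real) set" where
  "S_R18b = {(l1, l2). -1 \<le> l1 \<and> l1 \<le> 1 \<and> 0 \<le> l2 \<and> l2 \<le> 1}"

definition S_MR18b :: "(real \<times> real) set" where
  "S_MR18b = {(l1, l2). -2 \<le> l1 \<and> l1 \<le> 1 \<and> -2 \<le> l2 \<and> l2 \<le> 1 \<and> -1 \<le> l1 + l2 \<and> l1 + l2 \<le> 2}"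

definition S_MG :: "(real \<times> real) set" where
  "S_MG = {(l1, l2). 0 \<le> l1 \<and> l1 \<le> 3 \<and> 0 \<le> l2 \<and> l2 \<le> 3 \<and> 0 \<le> l1 + l2 \<and> l1 + l2 \<le> 3}"

end

theory Submission
  imports Defs
begin

lemma pG_mono:
  fixes A B t s :: real
  assumes A: "0 \<le> A" and B: "0 \<le> B" and AB: "A + B \<le> 3"
    and t: "0 \<le> t" and ts: "t \<le> s" and s: "s \<le> 1"
  shows "A * t + (B - A) * t^2 + (1 - B) * t^3 \<le> A * s + (B - A) * s^2 + (1 - B) * s^3"
proof -
  define Q0 where "Q0 = s^2 + s*t + t^2"
  define Q1 where "Q1 = (1-t)^2 + (1-t)*(1-s) + (1-s)^2"
  define Q2 where "Q2 = 3*(s+t) - 2*Q0"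
  have eq: "(A * s + (B - A) * s^2 + (1 - B) * s^3) - (A * t + (B - A) * t^2 + (1 - B) * t^3)
      = (s - t) * (A * Q1 + B * Q2 + (3 - A - B) * Q0) / 3"
    unfolding Q0_def Q1_def Q2_def by (simp add: algebra_simps power2_eq_square power3_eq_cube)
  have s0: "0 \<le> s" using t ts by linarith
  have st0: "0 \<le> s*t" using s0 t by (rule mult_nonneg_nonneg)
  have q0: "Q0 \<ge> 0" unfolding Q0_def using st0 by (intro add_nonneg_nonneg) auto
  have m1: "0 \<le> (1-t)*(1-s)" using ts s by (intro mult_nonneg_nonneg) auto
  have q1: "Q1 \<ge> 0" unfolding Q1_def using m1 by (intro add_nonneg_nonneg) auto
  have a1: "s * s \<le> s * 1" using s s0 by (intro mult_left_mono)
  have a2: "t * t \<le> t * 1" using s ts t by (intro mult_left_mono) auto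
  have a3: "s*t \<le> s*1" using s ts t s0 by (intro mult_left_mono) auto
  have a4: "s*t \<le> 1*t" using s t by (intro mult_right_mono) auto
  have q2: "Q2 \<ge> 0" unfolding Q2_def Q0_def power2_eq_square using a1 a2 a3 a4 by (simp only: mult_1_right mult_1_left) (smt (verit))
  have "A * Q1 + B * Q2 + (3 - A - B) * Q0 \<ge> 0"
    using A B AB q0 q1 q2 by (intro add_nonneg_nonneg mult_nonneg_nonneg) auto
  hence "(s - t) * (A * Q1 + B * Q2 + (3 - A - B) * Q0) / 3 \<ge> 0" using ts by simp
  with eq show ?thesis by linarith
qed

lemma FG_cdf:
  fixes G :: "real \<Rightarrow> real"
  assumes G: "is_cdf G" and c: "continuous_on UNIV G"
    and A: "0 \<le> A" and B: "0 \<le> B" and AB: "A + B \<le> 3"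
  shows "is_cdf (F_G A B G)"
proof -
  let ?p = "\<lambda>g::real. A * g + (B - A) * g^2 + (1 - B) * g^3"
  have F: "F_G A B G = (\<lambda>x. ?p (G x))" by (rule ext) (simp add: F_G_def)
  have Gm: "mono G" and G01: "\<And>x. 0 \<le> G x \<and> G x \<le> 1"
    and Gb: "(G \<longlongrightarrow> 0) at_bot" and Gt: "(G \<longlongrightarrow> 1) at_top"
    using G unfolding is_cdf_def by auto
  have pm: "\<And>t s. 0 \<le> t \<Longrightarrow> t \<le> s \<Longrightarrow> s \<le> 1 \<Longrightarrow> ?p t \<le> ?p s"
    using pG_mono[OF A B AB] by blast
  have mono: "mono (\<lambda>x. ?p (G x))"
  proof (rule monoI)
    fix x y :: real assume "x \<le> y"
    hence "G x \<le> G y" using Gm by (simp add: monoD)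
    thus "?p (G x) \<le> ?p (G y)" using pm G01 by blast
  qed
  have vals: "0 \<le> ?p (G x) \<and> ?p (G x) \<le> 1" for x
  proof -
    have "?p 0 \<le> ?p (G x)" "?p (G x) \<le> ?p 1" using pm G01 by blast+
    thus ?thesis by simp
  qed
  have cont: "continuous (at_right x) (\<lambda>x. ?p (G x))" for x
  proof -
    have "isCont G x" using c by (simp add: continuous_on_eq_continuous_at)
    hence "isCont (\<lambda>x. ?p (G x)) x" by (intro continuous_intros) auto
    thus ?thesis by (rule continuous_at_imp_continuous_within)
  qed
  have l0: "((\<lambda>x. ?p (G x)) \<longlongrightarrow> ?p 0) at_bot" by (intro tendsto_intros Gb)
  have l1: "((\<lambda>x. ?p (G x)) \<longlongrightarrow> ?p 1) at_top" by (intro tendsto_intros Gt)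
  show ?thesis unfolding F is_cdf_def using mono vals cont l0 l1 by simp
qed

lemma R_eq_G: "F_R18b l1 l2 G = F_G (1 + l1 + l2) (1 - l2) G"
  by (rule ext) (simp add: F_R18b_def F_G_def algebra_simps)

lemma G_eq_R: "F_G l1 l2 G = F_R18b (l1 + l2 - 2) (1 - l2) G"
  by (rule ext) (simp add: F_R18b_def F_G_def algebra_simps)

theorem proposition4:
  fixes G :: "real \<Rightarrow> real"
  assumes "is_cdf G" and "continuous_on UNIV G"
  shows "(\<forall>l1 l2. (l1, l2) \<in> S_R18b \<longrightarrow> is_cdf (F_R18b l1 l2 G)) \<and>
         (\<forall>l1 l2. (l1, l2) \<in> S_MR18b \<longrightarrow> is_cdf (F_R18b l1 l2 G)) \<and>
         (\<forall>l1 l2. (l1, l2) \<in> S_MR18b \<longrightarrow>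
           (1 + l1 + l2, 1 - l2) \<in> S_MG \<and> F_R18b l1 l2 G = F_G (1 + l1 + l2) (1 - l2) G) \<and>
         (\<forall>l1 l2. (l1, l2) \<in> S_MG \<longrightarrow>
           (l1 + l2 - 2, 1 - l2) \<in> S_MR18b \<and> F_G l1 l2 G = F_R18b (l1 + l2 - 2) (1 - l2) G)"
proof -
  have ii: "is_cdf (F_R18b l1 l2 G)" if "(l1, l2) \<in> S_MR18b" for l1 l2
    unfolding R_eq_G using that
    by (intro FG_cdf[OF assms]) (auto simp: S_MR18b_def)
  have i: "is_cdf (F_R18b l1 l2 G)" if "(l1, l2) \<in> S_R18b" for l1 l2
    using that by (intro ii) (auto simp: S_R18b_def S_MR18b_def)
  show ?thesis
  proof (intro conjI allI impI)
    fix l1 l2 assume "(l1, l2) \<in> S_MR18b"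
    thus "(1 + l1 + l2, 1 - l2) \<in> S_MG" by (auto simp: S_MR18b_def S_MG_def)
    show "F_R18b l1 l2 G = F_G (1 + l1 + l2) (1 - l2) G" by (rule R_eq_G)
  next
    fix l1 l2 assume "(l1, l2) \<in> S_MG"
    thus "(l1 + l2 - 2, 1 - l2) \<in> S_MR18b" by (auto simp: S_MR18b_def S_MG_def)
    show "F_G l1 l2 G = F_R18b (l1 + l2 - 2) (1 - l2) G" by (rule G_eq_R)
  qed (use i ii in auto)
qed

end
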